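(* Let $Q\subset\mathbb{R}^n$ be compact and controlled invariant. Then $\lim_{\tau\searrow0}h_{\mathrm{rec}}(\tau,Q)=h_{\mathrm{inv}}(Q)$.
   Context: Control system $\dot x=f(x,u)$, $x\in\mathbb R^n$, $f$ locally Lipschitz, controls $u\in\mathcal U$ = piecewise continuous functions $\mathbb R_{\ge0}\to U$, $U\subset\mathbb R^m$ compact; $\xi(x,u,t)$ the solution; $N_\varepsilon(Q)=\{y:\exists x\in Q,\|x-y\|\le\varepsilon\}$; $\log$ base 2. Controlled invariant: for each $x\in Q$ some $u$ keeps $\xi(x,u,t)\in Q$ for all $t\ge0$. $S\subseteq\mathcal U$ is invariance $(T,\varepsilon,Q)$-spanning if for every $x\in Q$ some $u\in S$ has $\xi(x,u,t)\in N_\varepsilon(Q)$ for all $t\in[0,T]$; $r_{\mathrm{inv}}(T,\varepsilon,Q)$ minimal cardinality; $h_{\mathrm{inv}}(Q)=\lim_{\varepsilon\searrow0}\limsup_{T\to\infty}\frac1T\log r_{\mathrm{inv}}(T,\varepsilon,Q)$. A trajectory $\xi(x,u,\cdot)$ is $(T,\varepsilon,\tau,Q)$-recurrent ($T\ge\tau$) if for every $t\in[0,T-\tau]$ there is $t'\in[t,t+\tau]$ with $\xi(x,u,t')\in N_\varepsilon(Q)$. $S$ is recurrence $(T,\varepsilon,\tau,Q)$-spanning if for every $x\in Q$ some $u\in S$ makes $\xi(x,u,\cdot)$ $(T,\varepsilon,\tau,Q)$-recurrent; $r_{\mathrm{rec}}(T,\varepsilon,\tau,Q)$ minimal cardinality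 ($\infty$ if none); $h_{\mathrm{rec}}(\tau,Q)=\lim_{\varepsilon\searrow0}\limsup_{T\to\infty}\frac1T\log r_{\mathrm{rec}}(T,\varepsilon,\tau,Q)$. Standing assumption: for all $x\in Q,u\in\mathcal U$, $\xi(x,u,\cdot)$ is defined on $[0,\tau]$ and continuous in $x$. *)

theory Defs
  imports "HOL-Analysis.Analysis" "HOL-Library.Liminf_Limsup"
begin

definition loc_lipschitz :: "(real^'n \<Rightarrow> real^'m \<Rightarrow> real^'n) \<Rightarrow> bool" where
  "loc_lipschitz f \<longleftrightarrow>
     (\<forall>z. \<exists>\<delta>>0. \<exists>L. L-lipschitz_on (cball z \<delta>) (\<lambda>(x, v). f x v))"

definition piecewise_cont :: "(real \<Rightarrow> 'a::real_normed_vector) \<Rightarrow> bool" where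
  "piecewise_cont u \<longleftrightarrow>
     (\<forall>T\<ge>0. \<exists>D. finite D \<and> D \<subseteq> {0..T} \<and>
        (\<forall>t\<in>{0..T} - D. continuous (at t within {0..}) u) \<and>
        (\<forall>t\<in>D. (\<exists>l. (u \<longlongrightarrow> l) (at_right t)) \<and> (0 < t \<longrightarrow> (\<exists>l. (u \<longlongrightarrow> l) (at_left t)))))"

definition controls :: "(real^'m) set \<Rightarrow> (real \<Rightarrow> real^'m) set" where
  "controls U = {u. piecewise_cont u \<and> (\<forall>t\<ge>0. u t \<in> U)}"

text \<open>y is the (Caratheodory) solution xi(x,u,.) on the set S \<subseteq> [0,\<infinity>) containing 0:
  y(t) = x + int_0^t f(y(s),u(s)) ds.  By local Lipschitz continuity of f
  such a solution is unique, so "\<exists>y. is_sol \<dots>" expresses that xi(x,u,.) is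
  defined on S, and properties of that y are properties of xi(x,u,.).\<close>
definition is_sol ::
  "(real^'n \<Rightarrow> real^'m \<Rightarrow> real^'n) \<Rightarrow> real^'n \<Rightarrow> (real \<Rightarrow> real^'m) \<Rightarrow> real set \<Rightarrow> (real \<Rightarrow> real^'n) \<Rightarrow> bool"
  where
  "is_sol f x u S y \<longleftrightarrow> continuous_on S y \<and>
     (\<forall>t\<in>S. ((\<lambda>s. f (y s) (u s)) has_integral (y t - x)) {0..t})"

definition nbhd :: "real \<Rightarrow> (real^'n) set \<Rightarrow> (real^'n) set" where
  "nbhd \<epsilon> Q = {y. \<exists>x\<in>Q. norm (x - y) \<le> \<epsilon>}"

definition controlled_invariant ::
  "(real^'n \<Rightarrow> real^'m \<Rightarrow> real^'n) \<Rightarrow> (real^'m) set \<Rightarrow> (real^'n) set \<Rightarrow> bool" where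
  "controlled_invariant f U Q \<longleftrightarrow>
     (\<forall>x\<in>Q. \<exists>u\<in>controls U. \<exists>y. is_sol f x u {0..} y \<and> (\<forall>t\<ge>0. y t \<in> Q))"

definition inv_spanning ::
  "(real^'n \<Rightarrow> real^'m \<Rightarrow> real^'n) \<Rightarrow> (real^'m) set \<Rightarrow> real \<Rightarrow> real \<Rightarrow> (real^'n) set
    \<Rightarrow> (real \<Rightarrow> real^'m) set \<Rightarrow> bool" where
  "inv_spanning f U T \<epsilon> Q S \<longleftrightarrow> S \<subseteq> controls U \<and>
     (\<forall>x\<in>Q. \<exists>u\<in>S. \<exists>y. is_sol f x u {0..T} y \<and> (\<forall>t\<in>{0..T}. y t \<in> nbhd \<epsilon> Q))"

text \<open>Minimal cardinality (\<infinity> if no finite spanning set exists).\<close>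
definition r_inv ::
  "(real^'n \<Rightarrow> real^'m \<Rightarrow> real^'n) \<Rightarrow> (real^'m) set \<Rightarrow> real \<Rightarrow> real \<Rightarrow> (real^'n) set \<Rightarrow> ereal" where
  "r_inv f U T \<epsilon> Q = (INF S \<in> {S. finite S \<and> inv_spanning f U T \<epsilon> Q S}. ereal (real (card S)))"

definition recurrent ::
  "(real^'n \<Rightarrow> real^'m \<Rightarrow> real^'n) \<Rightarrow> real^'n \<Rightarrow> (real \<Rightarrow> real^'m) \<Rightarrow> real \<Rightarrow> real \<Rightarrow> real
    \<Rightarrow> (real^'n) set \<Rightarrow> bool" where
  "recurrent f x u T \<epsilon> \<tau> Q \<longleftrightarrow> T \<ge> \<tau> \<and>
     (\<exists>y. is_sol f x u {0..T} y \<and>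
        (\<forall>t\<in>{0..T - \<tau>}. \<exists>t'\<in>{t..t + \<tau>}. y t' \<in> nbhd \<epsilon> Q))"

definition rec_spanning ::
  "(real^'n \<Rightarrow> real^'m \<Rightarrow> real^'n) \<Rightarrow> (real^'m) set \<Rightarrow> real \<Rightarrow> real \<Rightarrow> real \<Rightarrow> (real^'n) set
    \<Rightarrow> (real \<Rightarrow> real^'m) set \<Rightarrow> bool" where
  "rec_spanning f U T \<epsilon> \<tau> Q S \<longleftrightarrow> S \<subseteq> controls U \<and>
     (\<forall>x\<in>Q. \<exists>u\<in>S. recurrent f x u T \<epsilon> \<tau> Q)"

definition r_rec ::
  "(real^'n \<Rightarrow> real^'m \<Rightarrow> real^'n) \<Rightarrow> (real^'m) set \<Rightarrow> real \<Rightarrow> real \<Rightarrow> real \<Rightarrow> (real^'n) set \<Rightarrow> ereal" where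
  "r_rec f U T \<epsilon> \<tau> Q = (INF S \<in> {S. finite S \<and> rec_spanning f U T \<epsilon> \<tau> Q S}. ereal (real (card S)))"

definition elog2 :: "ereal \<Rightarrow> ereal" where
  "elog2 r = (if r = \<infinity> then \<infinity> else if r \<le> 0 then -\<infinity> else ereal (log 2 (real_of_ereal r)))"

definition h_inv ::
  "(real^'n \<Rightarrow> real^'m \<Rightarrow> real^'n) \<Rightarrow> (real^'m) set \<Rightarrow> (real^'n) set \<Rightarrow> ereal" where
  "h_inv f U Q = Lim (at_right 0)
     (\<lambda>\<epsilon>. Limsup at_top (\<lambda>T. ereal (1 / T) * elog2 (r_inv f U T \<epsilon> Q)))"

definition h_rec ::
  "(real^'n \<Rightarrow> real^'m \<Rightarrow> real^'n) \<Rightarrow> (real^'m) set \<Rightarrow> real \<Rightarrow> (real^'n) set \<Rightarrow> ereal" where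
  "h_rec f U \<tau> Q = Lim (at_right 0)
     (\<lambda>\<epsilon>. Limsup at_top (\<lambda>T. ereal (1 / T) * elog2 (r_rec f U T \<epsilon> \<tau> Q)))"

end

theory Submission
  imports Defs
begin


lemma sol_at0:
  assumes "is_sol f x u {0..T} y" "0 \<le> T"
  shows "y 0 = x"
proof -
  have "((\<lambda>s. f (y s) (u s)) has_integral (y 0 - x)) {0..0}"
  proof -
    have "0 \<in> {0..T}" using assms(2) by auto
    then show ?thesis using assms(1) unfolding is_sol_def by blast
  qed
  moreover have "((\<lambda>s. f (y s) (u s)) has_integral 0) {0..(0::real)}"
    using has_integral_refl(1)[of "\<lambda>s. f (y s) (u s)" "0::real"] by simp
  ultimately have "y 0 - x = 0" by (rule has_integral_unique)
  then show ?thesis by simp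
qed

lemma sol_diff:
  assumes "is_sol f x u {0..T} y" "0 \<le> a" "a \<le> c" "c \<le> T"
  shows "((\<lambda>s. f (y s) (u s)) has_integral (y c - y a)) {a..c}"
proof -
  let ?h = "\<lambda>s. f (y s) (u s)"
  have hc: "(?h has_integral (y c - x)) {0..c}" and ha: "(?h has_integral (y a - x)) {0..a}"
    using assms unfolding is_sol_def by auto
  have "?h integrable_on {a..c}"
    using integrable_subinterval_real[of ?h 0 c a c] hc assms by auto
  then have hac: "(?h has_integral integral {a..c} ?h) {a..c}" by auto
  have "(?h has_integral ((y a - x) + integral {a..c} ?h)) {0..c}"
    using has_integral_combine[OF _ _ ha hac] assms by auto
  then have "(y a - x) + integral {a..c} ?h = y c - x"
    using has_integral_unique[OF _ hc] by blast
  then have "integral {a..c} ?h = y c - y a" by (simp add: algebra_simps)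
  then show ?thesis using hac by simp
qed

lemma traj_bound:
  fixes f :: "real^'n \<Rightarrow> real^'m \<Rightarrow> real^'n"
  assumes Mb: "\<forall>p\<in>nbhd 1 Q. \<forall>v\<in>U. norm (f p v) \<le> M" and M0: "0 \<le> M"
    and sol: "is_sol f x u {0..T} y" and uU: "\<forall>t\<ge>0. u t \<in> U"
    and ab: "0 \<le> a" "a \<le> b" "b \<le> T"
    and ya: "y a \<in> nbhd \<epsilon> Q" and e0: "0 \<le> \<epsilon>" and small: "\<epsilon> + M * (b - a) < 1"
  shows "norm (y b - y a) \<le> M * (b - a)"
proof -
  define g where "g r = norm (y r - y a)" for r
  have ycont: "continuous_on {0..T} y" using sol unfolding is_sol_def by auto
  have gcont: "continuous_on {a..b} g"
    unfolding g_def
    by (intro continuous_intros continuous_on_subset[OF ycont]) (use ab in auto)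
  obtain x0 where x0: "x0 \<in> Q" "norm (x0 - y a) \<le> \<epsilon>" using ya unfolding nbhd_def by auto
  have key: "g c \<le> M * (c - a)" if c: "a \<le> c" "c \<le> b" and le: "\<forall>q\<in>{a..c}. g q \<le> 1 - \<epsilon>" for c
  proof -
    have int: "((\<lambda>s. f (y s) (u s)) has_integral (y c - y a)) {a..c}"
      using sol_diff[OF sol] ab c by auto
    have bnd: "norm (f (y q) (u q)) \<le> M" if q: "q \<in> {a..c}" for q
    proof -
      have "norm (x0 - y q) \<le> norm (x0 - y a) + norm (y a - y q)"
        using norm_triangle_ineq[of "x0 - y a" "y a - y q"] by simp
      also have "norm (y a - y q) = g q" unfolding g_def by (simp add: norm_minus_commute)
      finally have "norm (x0 - y q) \<le> norm (x0 - y a) + g q" .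
      moreover have "g q \<le> 1 - \<epsilon>" using le q by auto
      ultimately have "norm (x0 - y q) \<le> 1" using x0 by linarith
      then have "y q \<in> nbhd 1 Q" unfolding nbhd_def using x0 by auto
      moreover have "u q \<in> U" using uU q ab by auto
      ultimately show ?thesis using Mb by auto
    qed
    have "norm (y c - y a) \<le> M * (c - a)"
      using has_integral_bound_real[OF M0 _ int, of "{}"] bnd c by simp
    then show ?thesis by (simp add: g_def)
  qed
  define d where "d = (M * (b - a) + (1 - \<epsilon>)) / 2"
  have d1: "M * (b - a) < d" "d < 1 - \<epsilon>" using small unfolding d_def by auto
  define B where "B = {a..b} \<inter> g -` {d..}"
  have "B = {}"
  proof (rule ccontr)
    assume Bne: "B \<noteq> {}"
    have clB: "closed B" unfolding B_def by (rule continuous_closed_preimage[OF gcont]) auto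
    have bdd: "bdd_below B" unfolding B_def by (rule bdd_belowI[of _ a]) auto
    define c where "c = Inf B"
    have cB: "c \<in> B" unfolding c_def by (rule closed_contains_Inf[OF Bne bdd clB])
    have cle: "c \<le> r" if "r \<in> B" for r unfolding c_def by (rule cInf_lower[OF that bdd])
    have ga: "g a = 0" unfolding g_def by simp
    have cab: "a \<le> c" "c \<le> b" "d \<le> g c" using cB unfolding B_def by auto
    have gc: "g c = d"
    proof (rule ccontr)
      assume "g c \<noteq> d"
      then have "d < g c" using cab by auto
      have cc: "continuous_on {a..c} g" by (rule continuous_on_subset[OF gcont]) (use cab in auto)
      have "0 \<le> M * (b - a)" using M0 ab by simp
      then have "g a \<le> d" using ga d1 by linarith
      then obtain c1 where c1: "a \<le> c1" "c1 \<le> c" "g c1 = d"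
        using IVT'[of g a d c, OF _ _ _ cc] \<open>d < g c\<close> cab by auto
      have "c1 \<noteq> c" using c1 \<open>d < g c\<close> by auto
      moreover have "c1 \<in> B" unfolding B_def using c1 cab by auto
      ultimately have "c \<le> c1" "c1 \<noteq> c" using cle by auto
      then show False using c1 by simp
    qed
    have "\<forall>q\<in>{a..c}. g q \<le> 1 - \<epsilon>"
    proof
      fix q assume q: "q \<in> {a..c}"
      show "g q \<le> 1 - \<epsilon>"
      proof (cases "q = c")
        case True then show ?thesis using gc d1 by auto
      next
        case False
        then have "q < c" using q by auto
        have "q \<notin> B"
        proof
          assume "q \<in> B"
          then have "c \<le> q" by (rule cle)
          then show False using \<open>q < c\<close> by simp
        qed
        then have "g q < d" using q cab unfolding B_def by auto
        then show ?thesis using d1 by auto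
      qed
    qed
    then have "g c \<le> M * (c - a)" using key cab by auto
    also have "\<dots> \<le> M * (b - a)" using cab M0 by (intro mult_left_mono) auto
    finally show False using gc d1 by auto
  qed
  then have "\<forall>q\<in>{a..b}. g q \<le> 1 - \<epsilon>"
  proof (intro ballI)
    fix q assume "B = {}" "q \<in> {a..b}"
    then have "\<not> d \<le> g q" unfolding B_def by blast
    then show "g q \<le> 1 - \<epsilon>" using d1 by linarith
  qed
  then show ?thesis using key[of b] ab by (simp add: g_def)
qed



lemma exists_M:
  fixes f :: "real^'n \<Rightarrow> real^'m \<Rightarrow> real^'n"
  assumes "loc_lipschitz f" "compact U" "compact Q"
  shows "\<exists>M>0. \<forall>p\<in>nbhd 1 Q. \<forall>v\<in>U. norm (f p v) \<le> M"
proof -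
  let ?F = "\<lambda>(x, v). f x v"
  have "isCont ?F z" for z
  proof -
    obtain \<delta> L where d: "\<delta> > 0" "L-lipschitz_on (cball z \<delta>) ?F"
      using assms(1) unfolding loc_lipschitz_def by blast
    have "continuous_on (cball z \<delta>) ?F" by (rule lipschitz_on_continuous_on[OF d(2)])
    moreover have "z \<in> interior (cball z \<delta>)" using d(1) by simp
    ultimately show ?thesis by (rule continuous_on_interior)
  qed
  then have cont: "continuous_on (nbhd 1 Q \<times> U) ?F"
    by (simp add: continuous_at_imp_continuous_on)
  have eq: "nbhd 1 Q = {x + y | x y. x \<in> Q \<and> y \<in> cball 0 1}"
  proof (safe)
    fix z assume "z \<in> nbhd 1 Q"
    then obtain x where "x \<in> Q" "norm (x - z) \<le> 1" unfolding nbhd_def by auto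
    then show "\<exists>x y. z = x + y \<and> x \<in> Q \<and> y \<in> cball 0 1"
      by (intro exI[of _ x] exI[of _ "z - x"]) (auto simp: norm_minus_commute)
  next
    fix x y :: "real^'n" assume "x \<in> Q" "y \<in> cball 0 1"
    then show "x + y \<in> nbhd 1 Q" unfolding nbhd_def by (intro CollectI bexI[of _ x]) auto
  qed
  have "compact (nbhd 1 Q)" unfolding eq by (rule compact_sums[OF assms(3)]) simp
  then have "compact (nbhd 1 Q \<times> U)" using assms(2) by (rule compact_Times)
  then have "compact (?F ` (nbhd 1 Q \<times> U))" by (rule compact_continuous_image[OF cont])
  then obtain B where B: "\<forall>w\<in>?F ` (nbhd 1 Q \<times> U). norm w \<le> B"
    using compact_imp_bounded bounded_iff by metis
  show ?thesis
    by (rule exI[of _ "max B 1"]) (use B in force)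
qed

lemma rec_imp_inv:
  fixes f :: "real^'n \<Rightarrow> real^'m \<Rightarrow> real^'n"
  assumes Mb: "\<forall>p\<in>nbhd 1 Q. \<forall>v\<in>U. norm (f p v) \<le> M" and M0: "0 \<le> M"
    and t0: "0 < \<tau>" and e0: "0 \<le> \<epsilon>" and small: "\<epsilon> + M * \<tau> < 1"
    and rs: "rec_spanning f U T \<epsilon> \<tau> Q S"
  shows "inv_spanning f U T (\<epsilon> + M * \<tau>) Q S"
  unfolding inv_spanning_def
proof (intro conjI ballI)
  show "S \<subseteq> controls U" using rs unfolding rec_spanning_def by auto
  fix x assume xQ: "x \<in> Q"
  then obtain u where uS: "u \<in> S" and rec: "recurrent f x u T \<epsilon> \<tau> Q"
    using rs unfolding rec_spanning_def by auto
  have uU: "\<forall>t\<ge>0. u t \<in> U" using uS rs unfolding rec_spanning_def controls_def by auto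
  obtain y where Tt: "T \<ge> \<tau>" and sol: "is_sol f x u {0..T} y"
    and R: "\<forall>t\<in>{0..T - \<tau>}. \<exists>t'\<in>{t..t + \<tau>}. y t' \<in> nbhd \<epsilon> Q"
    using rec unfolding recurrent_def by auto
  have y0: "y 0 = x" using sol_at0[OF sol] Tt t0 by auto
  have "\<forall>s\<in>{0..T}. y s \<in> nbhd (\<epsilon> + M * \<tau>) Q"
  proof
    fix s assume s: "s \<in> {0..T}"
    obtain t' where t': "t' \<in> {0..s}" "s - t' \<le> \<tau>" "y t' \<in> nbhd \<epsilon> Q"
    proof (cases "s < \<tau>")
      case True
      have "y 0 \<in> nbhd \<epsilon> Q" using y0 xQ e0 unfolding nbhd_def by (intro CollectI bexI[of _ x]) auto
      then show ?thesis using that[of 0] True s by auto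
    next
      case False
      then have "s - \<tau> \<in> {0..T - \<tau>}" using s by auto
      then obtain t' where "t' \<in> {s - \<tau>..s - \<tau> + \<tau>}" "y t' \<in> nbhd \<epsilon> Q" using R by blast
      then show ?thesis using that[of t'] False by auto
    qed
    obtain x0 where x0: "x0 \<in> Q" "norm (x0 - y t') \<le> \<epsilon>" using t'(3) unfolding nbhd_def by auto
    have Ms: "M * (s - t') \<le> M * \<tau>" using M0 t' by (intro mult_left_mono) auto
    have "norm (y s - y t') \<le> M * (s - t')"
      by (rule traj_bound[OF Mb M0 sol uU _ _ _ t'(3) e0]) (use t' s Ms small in auto)
    then have "norm (x0 - y s) \<le> \<epsilon> + M * \<tau>"
      using norm_triangle_ineq[of "x0 - y t'" "y t' - y s"] x0 Ms
      by (simp add: norm_minus_commute)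
    then show "y s \<in> nbhd (\<epsilon> + M * \<tau>) Q" unfolding nbhd_def using x0 by auto
  qed
  then show "\<exists>u\<in>S. \<exists>y. is_sol f x u {0..T} y \<and> (\<forall>t\<in>{0..T}. y t \<in> nbhd (\<epsilon> + M * \<tau>) Q)"
    using uS sol by blast
qed



lemma zero_less_one_real: "(0::real) < 1" by simp

lemma elog2_mono:
  assumes "r1 \<le> r2" shows "elog2 r1 \<le> elog2 r2"
proof (cases "r2 = \<infinity>")
  case True then show ?thesis by (simp add: elog2_def)
next
  case False
  show ?thesis
  proof (cases "r1 \<le> 0")
    case True then show ?thesis by (auto simp: elog2_def)
  next
    case r1: False
    then obtain a b where ab: "r1 = ereal a" "r2 = ereal b" using False assms
      by (cases r1; cases r2) auto
    then have "0 < a" "a \<le> b" using r1 assms by auto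
    then show ?thesis using ab by (simp add: elog2_def)
  qed
qed

lemma rate_mono:
  assumes "0 < T" "r1 \<le> r2"
  shows "ereal (1 / T) * elog2 r1 \<le> ereal (1 / T) * elog2 r2"
  by (rule ereal_mult_left_mono[OF elog2_mono[OF assms(2)]]) (use assms in simp)

lemma nbhd_mono: "e1 \<le> e2 \<Longrightarrow> nbhd e1 Q \<subseteq> nbhd e2 Q"
  unfolding nbhd_def by force

lemma r_inv_anti:
  assumes "e1 \<le> e2" shows "r_inv f U T e2 Q \<le> r_inv f U T e1 Q"
  unfolding r_inv_def
proof (rule INF_superset_mono)
  show "{S. finite S \<and> inv_spanning f U T e1 Q S} \<subseteq> {S. finite S \<and> inv_spanning f U T e2 Q S}"
    using nbhd_mono[OF assms, of Q] unfolding inv_spanning_def by blast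
qed simp

lemma r_rec_anti:
  assumes "e1 \<le> e2" shows "r_rec f U T e2 \<tau> Q \<le> r_rec f U T e1 \<tau> Q"
  unfolding r_rec_def
proof (rule INF_superset_mono)
  have "recurrent f x u T e1 \<tau> Q \<Longrightarrow> recurrent f x u T e2 \<tau> Q" for x u
    using nbhd_mono[OF assms, of Q] unfolding recurrent_def by blast
  then show "{S. finite S \<and> rec_spanning f U T e1 \<tau> Q S} \<subseteq> {S. finite S \<and> rec_spanning f U T e2 \<tau> Q S}"
    unfolding rec_spanning_def by blast
qed simp

lemma r_rec_le_inv:
  assumes "0 < \<tau>" "\<tau> \<le> T" shows "r_rec f U T \<epsilon> \<tau> Q \<le> r_inv f U T \<epsilon> Q"
  unfolding r_rec_def r_inv_def
proof (rule INF_superset_mono)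
  have "inv_spanning f U T \<epsilon> Q S \<Longrightarrow> rec_spanning f U T \<epsilon> \<tau> Q S" for S
  proof -
    assume a: "inv_spanning f U T \<epsilon> Q S"
    show ?thesis unfolding rec_spanning_def
    proof (intro conjI ballI)
      show "S \<subseteq> controls U" using a unfolding inv_spanning_def by auto
      fix x assume "x \<in> Q"
      then obtain u y where "u \<in> S" "is_sol f x u {0..T} y" "\<forall>t\<in>{0..T}. y t \<in> nbhd \<epsilon> Q"
        using a unfolding inv_spanning_def by blast
      moreover have "\<forall>t\<in>{0..T - \<tau>}. \<exists>t'\<in>{t..t + \<tau>}. y t' \<in> nbhd \<epsilon> Q"
      proof
        fix t assume "t \<in> {0..T - \<tau>}"
        then show "\<exists>t'\<in>{t..t + \<tau>}. y t' \<in> nbhd \<epsilon> Q"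
          using calculation(3) assms by (intro bexI[of _ t]) auto
      qed
      ultimately show "\<exists>u\<in>S. recurrent f x u T \<epsilon> \<tau> Q"
        unfolding recurrent_def using assms by blast
    qed
  qed
  then show "{S. finite S \<and> inv_spanning f U T \<epsilon> Q S} \<subseteq> {S. finite S \<and> rec_spanning f U T \<epsilon> \<tau> Q S}"
    by blast
qed simp

lemma antitone_lim:
  fixes g :: "real \<Rightarrow> ereal"
  assumes anti: "\<And>a b. 0 < a \<Longrightarrow> a \<le> b \<Longrightarrow> g b \<le> g a"
  shows "(g \<longlongrightarrow> (SUP e\<in>{0<..}. g e)) (at_right 0)"
proof (rule order_tendstoI)
  fix y assume "y < (SUP e\<in>{0<..}. g e)"
  then obtain e where e: "e > 0" "y < g e" by (auto simp: less_SUP_iff)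
  show "\<forall>\<^sub>F x in at_right 0. y < g x"
    using eventually_at_right_real[OF e(1)]
  proof eventually_elim
    case (elim x)
    then have "g e \<le> g x" using anti[of x e] by auto
    then show ?case using e by auto
  qed
next
  fix y assume a: "(SUP e\<in>{0<..}. g e) < y"
  show "\<forall>\<^sub>F x in at_right 0. g x < y"
    using eventually_at_right_real[OF zero_less_one_real]
  proof eventually_elim
    case (elim x)
    then have "g x \<le> (SUP e\<in>{0<..}. g e)" by (intro SUP_upper) auto
    then show ?case using a by auto
  qed
qed

lemma antitone_Lim:
  fixes g :: "real \<Rightarrow> ereal"
  assumes anti: "\<And>a b. 0 < a \<Longrightarrow> a \<le> b \<Longrightarrow> g b \<le> g a"
  shows "Lim (at_right 0) g = (SUP e\<in>{0<..}. g e)"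
  by (rule tendsto_Lim[OF trivial_limit_at_right_real antitone_lim[OF anti]])


theorem corollary1:
  fixes f :: "real^'n \<Rightarrow> real^'m \<Rightarrow> real^'n"
    and U :: "(real^'m) set"
    and Q :: "(real^'n) set"
  assumes "loc_lipschitz f"
    and "compact U"
    and "compact Q"
    and "controlled_invariant f U Q"
  shows "((\<lambda>\<tau>. h_rec f U \<tau> Q) \<longlongrightarrow> h_inv f U Q) (at_right 0)"
proof -
  obtain M where M0: "M > 0" and Mb: "\<forall>p\<in>nbhd 1 Q. \<forall>v\<in>U. norm (f p v) \<le> M"
    using exists_M[OF assms(1-3)] by blast
  define Li where "Li = (\<lambda>e. Limsup at_top (\<lambda>T. ereal (1 / T) * elog2 (r_inv f U T e Q)))"
  define Lr where "Lr = (\<lambda>\<tau> e. Limsup at_top (\<lambda>T. ereal (1 / T) * elog2 (r_rec f U T e \<tau> Q)))"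
  have Li_anti: "Li b \<le> Li a" if "0 < a" "a \<le> b" for a b
  proof -
    have "\<forall>\<^sub>F T in at_top. ereal (1 / T) * elog2 (r_inv f U T b Q) \<le> ereal (1 / T) * elog2 (r_inv f U T a Q)"
      using eventually_gt_at_top[of "0::real"]
    proof eventually_elim
      case (elim T)
      show ?case by (rule rate_mono[OF elim r_inv_anti[OF that(2)]])
    qed
    then show ?thesis unfolding Li_def by (rule Limsup_mono)
  qed
  have Lr_anti: "Lr \<tau> b \<le> Lr \<tau> a" if "0 < a" "a \<le> b" for a b \<tau>
  proof -
    have "\<forall>\<^sub>F T in at_top. ereal (1 / T) * elog2 (r_rec f U T b \<tau> Q) \<le> ereal (1 / T) * elog2 (r_rec f U T a \<tau> Q)"
      using eventually_gt_at_top[of "0::real"]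
    proof eventually_elim
      case (elim T)
      show ?case by (rule rate_mono[OF elim r_rec_anti[OF that(2)]])
    qed
    then show ?thesis unfolding Lr_def by (rule Limsup_mono)
  qed
  define H where "H = (SUP e\<in>{0<..}. Li e)"
  have hi: "h_inv f U Q = H"
  proof -
    have "h_inv f U Q = Lim (at_right 0) Li" unfolding h_inv_def Li_def by simp
    also have "\<dots> = H" unfolding H_def by (rule antitone_Lim[OF Li_anti])
    finally show ?thesis .
  qed
  have hr: "h_rec f U \<tau> Q = (SUP e\<in>{0<..}. Lr \<tau> e)" for \<tau>
  proof -
    have "h_rec f U \<tau> Q = Lim (at_right 0) (Lr \<tau>)" unfolding h_rec_def Lr_def by simp
    also have "\<dots> = (SUP e\<in>{0<..}. Lr \<tau> e)" by (rule antitone_Lim[OF Lr_anti])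
    finally show ?thesis .
  qed
  have Lr_le: "Lr \<tau> e \<le> Li e" if "0 < \<tau>" for \<tau> e
  proof -
    have "\<forall>\<^sub>F T in at_top. ereal (1 / T) * elog2 (r_rec f U T e \<tau> Q) \<le> ereal (1 / T) * elog2 (r_inv f U T e Q)"
      using eventually_gt_at_top[of \<tau>]
    proof eventually_elim
      case (elim T)
      then have "0 < T" using that by simp
      show ?case by (rule rate_mono[OF \<open>0 < T\<close> r_rec_le_inv[OF that]]) (use elim in simp)
    qed
    then show ?thesis unfolding Lr_def Li_def by (rule Limsup_mono)
  qed
  have Li_le: "Li (e + M * \<tau>) \<le> Lr \<tau> e" if "0 < \<tau>" "0 \<le> e" "e + M * \<tau> < 1" for \<tau> e
  proof -
    have rr: "r_inv f U T (e + M * \<tau>) Q \<le> r_rec f U T e \<tau> Q" for T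
      unfolding r_rec_def r_inv_def
    proof (rule INF_superset_mono)
      show "{S. finite S \<and> rec_spanning f U T e \<tau> Q S}
          \<subseteq> {S. finite S \<and> inv_spanning f U T (e + M * \<tau>) Q S}"
        using rec_imp_inv[OF Mb _ that(1,2,3)] M0 by auto
    qed simp
    have "\<forall>\<^sub>F T in at_top. ereal (1 / T) * elog2 (r_inv f U T (e + M * \<tau>) Q) \<le> ereal (1 / T) * elog2 (r_rec f U T e \<tau> Q)"
      using eventually_gt_at_top[of "0::real"]
    proof eventually_elim
      case (elim T)
      show ?case by (rule rate_mono[OF elim rr])
    qed
    then show ?thesis unfolding Lr_def Li_def by (rule Limsup_mono)
  qed
  show ?thesis
    unfolding hi
  proof (rule order_tendstoI)
    fix a assume "a < H"
    then obtain e0 where e0: "e0 > 0" "a < Li e0" unfolding H_def by (auto simp: less_SUP_iff)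
    define e1 where "e1 = min e0 (1/2)"
    have e1: "0 < e1" "e1 < 1" "Li e0 \<le> Li e1" using e0 Li_anti[of e1 e0] unfolding e1_def by auto
    have "0 < e1 / M" using e1 M0 by simp
    show "\<forall>\<^sub>F \<tau> in at_right 0. a < h_rec f U \<tau> Q"
      using eventually_at_right_real[OF \<open>0 < e1 / M\<close>]
    proof eventually_elim
      case (elim \<tau>)
      then have t: "0 < \<tau>" "M * \<tau> < e1" using M0 by (auto simp: field_simps)
      define e where "e = e1 - M * \<tau>"
      have ee: "0 < e" "e + M * \<tau> = e1" using t unfolding e_def by auto
      have "a < Li e1" using e0 e1 by auto
      also have "Li e1 \<le> Lr \<tau> e" using Li_le[of \<tau> e] ee t e1 by auto
      also have "Lr \<tau> e \<le> h_rec f U \<tau> Q" unfolding hr using ee by (intro SUP_upper) auto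
      finally show ?case .
    qed
  next
    fix b assume "H < b"
    show "\<forall>\<^sub>F \<tau> in at_right 0. h_rec f U \<tau> Q < b"
      using eventually_at_right_real[OF zero_less_one_real]
    proof eventually_elim
      case (elim \<tau>)
      have "h_rec f U \<tau> Q \<le> H"
        unfolding hr H_def
      proof (rule SUP_least)
        fix e :: real assume "e \<in> {0<..}"
        then have "Li e \<le> (SUP e\<in>{0<..}. Li e)" by (intro SUP_upper)
        then show "Lr \<tau> e \<le> (SUP e\<in>{0<..}. Li e)" using Lr_le[of \<tau> e] elim by auto
      qed
      then show ?case using \<open>H < b\<close> by auto
    qed
  qed
qed

end
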